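(* Let $C_1>0$ and $\underline{\Phi}\in\mathbb{R}$. Let $T>0$ and $\mu\in C([0,T],(0,\infty))$ with $\Phi_h(\mu)\neq0$ (here $\Phi_h(\mu)$ is computed with terminal time $T$). Consider: (a) there exist $\lambda_1,\lambda_2\in\mathbb{R}$ with $\mathcal{G}(\mu)=C_1$, $\Phi(z_\mu(T))=\underline{\Phi}$, $\lambda_1 g'(\mu(t))+\lambda_2\Phi_h(\mu)=0$ for all $t\in[0,T]$, and $1+\lambda_1 g(\mu(T))+\lambda_2\Phi_h(\mu)\mu(T)=0$ (the first-order necessary conditions for a stationary point of $(\mu,T)\mapsto T$ subject to $\mathcal{G}(\mu)=C_1$ and $\Phi(z_\mu(T))=\underline{\Phi}$); (b) for a given $C_2>0$, there exist $\lambda_{1,\mathrm{ref}},\lambda_{2,\mathrm{ref}}\in\mathbb{R}$ with $\mathcal{G}(\mu)=C_1$, $\mathcal{I}(\mu)=C_2$, $\lambda_{1,\mathrm{ref}}g'(\mu(t))+\lambda_{2,\mathrm{ref}}=0$ for all $t\in[0,T]$, and $1+\lambda_{1,\mathrm{ref}}g(\mu(T))+\lambda_{2,\mathrm{ref}}\mu(T)=0$ (the first-order necessary conditions for a stationary point of $(\mu,T)\mapsto T$ subject to $\mathcal{G}(\mu)=C_1$ and $\mathcal{I}(\mu)=C_2$). Then: if (a) holds, then (b) holds with $C_2:=\mathcal{I}(\mu)$, which satisfies $\Phi(\hat z(C_2))=\underline{\Phi}$, and with $\lambda_{1,\mathrm{ref}}=\lambda_1$, $\lambda_{2,\mathrm{ref}}=\lambda_2\Phi_h(\mu)$.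 Conversely, if (b) holds for some $C_2>0$ with $\Phi(\hat z(C_2))=\underline{\Phi}$, then (a) holds with $\lambda_1=\lambda_{1,\mathrm{ref}}$, $\lambda_2=\lambda_{2,\mathrm{ref}}/\Phi_h(\mu)$.
   Context: Standing setup: $n,s\ge1$, $p\in\mathbb{R}^s$, $z_0\in\mathbb{R}^n$; $h:\mathbb{R}^n\times\mathbb{R}^s\to\mathbb{R}^n$ is continuously differentiable in its first argument and such that the autonomous initial value problem $\hat z'(\tau)=h(\hat z(\tau),p)$, $\hat z(0)=z_0$ has a unique solution $\hat z$ defined for all $\tau\in\mathbb{R}$. For $T>0$ and $\mu\in C([0,T],\mathbb{R})$, $z_\mu:[0,T]\to\mathbb{R}^n$ denotes the solution of $\dot z(t)=\mu(t)h(z(t),p)$, $z(0)=z_0$. $\Phi:\mathbb{R}^n\to\mathbb{R}$ is continuously differentiable, and $g:\mathbb{R}\to\mathbb{R}$ is continuously differentiable and positive. Define $\mathcal{G}(\mu):=\int_0^T g(\mu(t))\,\mathrm{d}t$, $\mathcal{I}(\mu):=\int_0^T\mu(t)\,\mathrm{d}t$, and $\Phi_h(\mu):=\nabla\Phi(z_\mu(T))\cdot h(z_\mu(T),p)$ (the Lie derivative of $\Phi$ along $h$ at the terminal state). *)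

theory Defs
  imports "HOL-Analysis.Analysis"
begin

definition solves_scaled_ivp ::
  "('v::real_normed_vector \<Rightarrow> 'q \<Rightarrow> 'v) \<Rightarrow> 'q \<Rightarrow> 'v \<Rightarrow> real \<Rightarrow> (real \<Rightarrow> real) \<Rightarrow> (real \<Rightarrow> 'v) \<Rightarrow> bool" where
  "solves_scaled_ivp h p z0 T mu z \<longleftrightarrow>
     z 0 = z0 \<and>
     (\<forall>t\<in>{0..T}. (z has_vector_derivative (mu t *\<^sub>R h (z t) p)) (at t within {0..T}))"

definition solves_autonomous_ivp ::
  "('v::real_normed_vector \<Rightarrow> 'q \<Rightarrow> 'v) \<Rightarrow> 'q \<Rightarrow> 'v \<Rightarrow> (real \<Rightarrow> 'v) \<Rightarrow> bool" where
  "solves_autonomous_ivp h p z0 w \<longleftrightarrow>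
     w 0 = z0 \<and> (\<forall>\<tau>. (w has_vector_derivative h (w \<tau>) p) (at \<tau>))"

definition GG :: "(real \<Rightarrow> real) \<Rightarrow> real \<Rightarrow> (real \<Rightarrow> real) \<Rightarrow> real" where
  "GG g T mu = integral {0..T} (\<lambda>t. g (mu t))"

definition II :: "real \<Rightarrow> (real \<Rightarrow> real) \<Rightarrow> real" where
  "II T mu = integral {0..T} mu"

text \<open>Lie derivative of Phi along h at the terminal state x = z_mu(T):
  grad Phi(x) . h(x,p), i.e. the derivative of Phi at x applied to h(x,p).\<close>
definition Phi_h :: "('v::real_normed_vector \<Rightarrow> real) \<Rightarrow> ('v \<Rightarrow> 'q \<Rightarrow> 'v) \<Rightarrow> 'q \<Rightarrow> 'v \<Rightarrow> real" where
  "Phi_h Phi h p x = frechet_derivative Phi (at x) (h x p)"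

end

theory Submission
  imports Defs
begin

lemma gronwall0:
  fixes d d' :: "real \<Rightarrow> 'a::real_inner"
  assumes T: "T \<ge> 0"
    and der: "\<And>t. t \<in> {0..T} \<Longrightarrow> (d has_vector_derivative d' t) (at t within {0..T})"
    and bnd: "\<And>t. t \<in> {0..T} \<Longrightarrow> norm (d' t) \<le> c * norm (d t)"
    and c: "c \<ge> 0" and d0: "d 0 = 0"
    and t: "t \<in> {0..T}"
  shows "d t = 0"
proof -
  define ph where "ph s = exp (- (2 * c * s)) * (d s \<bullet> d s)" for s
  define ph' where "ph' s = exp (- (2 * c * s)) * (-2 * c * (d s \<bullet> d s) + 2 * (d s \<bullet> d' s))" for s
  have D: "(ph has_derivative (\<lambda>x. x * ph' s)) (at s within {0..t})" if s: "s \<in> {0..t}" for s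
  proof -
    have "(d has_vector_derivative d' s) (at s within {0..t})"
      using der[of s] s t by (auto intro: has_vector_derivative_within_subset)
    hence dd: "(d has_derivative (\<lambda>x. x *\<^sub>R d' s)) (at s within {0..t})"
      by (simp add: has_vector_derivative_def)
    have e: "((\<lambda>s. exp (- (2 * c * s))) has_derivative (\<lambda>x. x * (exp (- (2 * c * s)) * (- 2 * c)))) (at s within {0..t})"
      by (auto intro!: derivative_eq_intros simp: algebra_simps)
    have "((\<lambda>s. exp (- (2 * c * s)) * (d s \<bullet> d s)) has_derivative
       (\<lambda>x. exp (- (2 * c * s)) * (d s \<bullet> (x *\<^sub>R d' s) + (x *\<^sub>R d' s) \<bullet> d s) + x * (exp (- (2 * c * s)) * (- 2 * c)) * (d s \<bullet> d s))) (at s within {0..t})"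
      by (rule has_derivative_mult[OF e has_derivative_inner[OF dd dd], THEN has_derivative_eq_rhs]) (simp add: algebra_simps)
    thus ?thesis unfolding ph_def ph'_def
      by (rule has_derivative_eq_rhs) (auto simp: fun_eq_iff algebra_simps inner_commute)
  qed
  have "0 \<le> t" using t by simp
  from mvt_very_simple[OF this, of ph "\<lambda>s x. x * ph' s"] D
  obtain x where x: "x \<in> {0..t}" and eq: "ph t - ph 0 = (t - 0) * ph' x" by auto
  have xT: "x \<in> {0..T}" using x t by auto
  have "d x \<bullet> d' x \<le> norm (d x) * norm (d' x)" by (rule norm_cauchy_schwarz)
  also have "\<dots> \<le> norm (d x) * (c * norm (d x))" by (rule mult_left_mono[OF bnd[OF xT]]) simp
  also have "\<dots> = c * (d x \<bullet> d x)" by (simp add: power2_norm_eq_inner[symmetric] power2_eq_square)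
  finally have "ph' x \<le> 0" unfolding ph'_def by (simp add: mult_nonpos_nonneg mult_le_0_iff)
  hence "ph t \<le> 0" using eq d0 \<open>0 \<le> t\<close> by (simp add: ph_def mult_nonneg_nonpos)
  hence "d t \<bullet> d t \<le> 0" unfolding ph_def by (simp add: mult_le_0_iff)
  thus ?thesis by (metis inner_eq_zero_iff inner_ge_zero order_antisym)
qed

lemma key_reparam:
  fixes h :: "'v::euclidean_space \<Rightarrow> 'q \<Rightarrow> 'v"
    and D :: "'v \<Rightarrow> 'v \<Rightarrow>\<^sub>L 'v" and mu :: "real \<Rightarrow> real" and T :: real
  assumes hD: "\<forall>x. ((\<lambda>y. h y p) has_derivative blinfun_apply (D x)) (at x)"
    and Dc: "continuous_on UNIV D"
    and zhat: "solves_autonomous_ivp h p z0 zhat"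
    and T: "T \<ge> 0"
    and muc: "continuous_on {0..T} mu"
    and zmu: "solves_scaled_ivp h p z0 T mu zmu"
  shows "zmu T = zhat (integral {0..T} mu)"
proof -
  define m where "m t = integral {0..t} mu" for t
  define w where "w t = zhat (m t)" for t
  have mder: "(m has_vector_derivative mu t) (at t within {0..T})" if "t \<in> {0..T}" for t
    unfolding m_def using integral_has_vector_derivative[OF muc that] .
  have zd: "(zhat has_vector_derivative h (zhat \<tau>) p) (at \<tau>)" for \<tau>
    using zhat unfolding solves_autonomous_ivp_def by blast
  have wder: "(w has_vector_derivative mu t *\<^sub>R h (w t) p) (at t within {0..T})" if t: "t \<in> {0..T}" for t
  proof -
    have "((zhat \<circ> m) has_vector_derivative mu t *\<^sub>R h (zhat (m t)) p) (at t within {0..T})"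
      by (rule vector_diff_chain_within[OF mder[OF t]]) (rule has_vector_derivative_at_within[OF zd])
    thus ?thesis by (simp add: w_def[abs_def] comp_def)
  qed
  have zder: "(zmu has_vector_derivative mu t *\<^sub>R h (zmu t) p) (at t within {0..T})" if "t \<in> {0..T}" for t
    using zmu that unfolding solves_scaled_ivp_def by blast
  have wc: "continuous_on {0..T} w"
    using wder has_vector_derivative_continuous continuous_on_eq_continuous_within by blast
  have zc: "continuous_on {0..T} zmu"
    using zder has_vector_derivative_continuous continuous_on_eq_continuous_within by blast
  have "bounded (zmu ` {0..T} \<union> w ` {0..T})"
    using compact_continuous_image[OF zc] compact_continuous_image[OF wc]
    by (intro bounded_Un[THEN iffD2] conjI compact_imp_bounded) auto
  then obtain R where R: "\<forall>x\<in>zmu ` {0..T} \<union> w ` {0..T}. norm x \<le> R" and "R > 0"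
    unfolding bounded_pos by blast
  have inK: "zmu t \<in> cball 0 R" "w t \<in> cball 0 R" if "t \<in> {0..T}" for t
    using R that by auto
  have "bounded (D ` cball 0 R)"
    by (intro compact_imp_bounded compact_continuous_image continuous_on_subset[OF Dc]) auto
  then obtain B where B: "\<forall>y\<in>D ` cball 0 R. norm y \<le> B" and "B > 0"
    unfolding bounded_pos by blast
  have lip: "norm (h x p - h y p) \<le> B * norm (x - y)" if "x \<in> cball 0 R" "y \<in> cball 0 R" for x y
  proof (rule differentiable_bound[where f="\<lambda>y. h y p" and f'="\<lambda>x. blinfun_apply (D x)"])
    show "convex (cball (0::'v) R)" by simp
    show "((\<lambda>y. h y p) has_derivative blinfun_apply (D x)) (at x within cball 0 R)" for x
      using hD has_derivative_at_withinI by blast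
    show "onorm (blinfun_apply (D x)) \<le> B" if "x \<in> cball 0 R" for x
      using B that by (auto simp: norm_blinfun.rep_eq[symmetric])
  qed (use that in auto)
  have "bounded (mu ` {0..T})"
    by (intro compact_imp_bounded compact_continuous_image muc) auto
  then obtain M where M: "\<forall>y\<in>mu ` {0..T}. norm y \<le> M" and "M > 0"
    unfolding bounded_pos by blast
  define d where "d t = zmu t - w t" for t
  have dder: "(d has_vector_derivative mu t *\<^sub>R (h (zmu t) p - h (w t) p)) (at t within {0..T})"
    if "t \<in> {0..T}" for t
    unfolding d_def scaleR_diff_right by (intro has_vector_derivative_diff zder wder that)
  have dbnd: "norm (mu t *\<^sub>R (h (zmu t) p - h (w t) p)) \<le> (M * B) * norm (d t)" if t: "t \<in> {0..T}" for t
  proof -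
    have "norm (mu t *\<^sub>R (h (zmu t) p - h (w t) p)) = \<bar>mu t\<bar> * norm (h (zmu t) p - h (w t) p)" by simp
    also have "\<dots> \<le> M * (B * norm (d t))"
      using M t lip[OF inK[OF t]] unfolding d_def
      by (intro mult_mono) auto
    finally show ?thesis by simp
  qed
  have d0: "d 0 = 0"
    using zmu zhat unfolding d_def w_def m_def solves_scaled_ivp_def solves_autonomous_ivp_def by simp
  have "d T = 0"
    by (rule gronwall0[OF T dder dbnd _ d0]) (use \<open>M > 0\<close> \<open>B > 0\<close> T in auto)
  thus ?thesis unfolding d_def w_def m_def by simp
qed

theorem theorem3:
  fixes h :: "real^'n \<Rightarrow> real^'s \<Rightarrow> real^'n"
    and p :: "real^'s" and z0 :: "real^'n"
    and zhat :: "real \<Rightarrow> real^'n"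
    and Phi :: "real^'n \<Rightarrow> real"
    and g :: "real \<Rightarrow> real"
    and C1 Philow T :: real
    and mu :: "real \<Rightarrow> real"
    and zmu :: "real \<Rightarrow> real^'n"
  assumes h_C1: "\<forall>q. \<exists>D :: real^'n \<Rightarrow> (real^'n) \<Rightarrow>\<^sub>L (real^'n).
                     (\<forall>x. ((\<lambda>y. h y q) has_derivative blinfun_apply (D x)) (at x)) \<and> continuous_on UNIV D"
    and zhat_sol: "solves_autonomous_ivp h p z0 zhat"
    and zhat_unique: "\<forall>w. solves_autonomous_ivp h p z0 w \<longrightarrow> w = zhat"
    and Phi_C1: "\<exists>D :: real^'n \<Rightarrow> (real^'n) \<Rightarrow>\<^sub>L real.
                     (\<forall>x. (Phi has_derivative blinfun_apply (D x)) (at x)) \<and> continuous_on UNIV D"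
    and g_diff: "\<forall>x. g differentiable (at x)"
    and g'_cont: "continuous_on UNIV (deriv g)"
    and g_pos: "\<forall>x. g x > 0"
    and C1_pos: "C1 > 0"
    and T_pos: "T > 0"
    and mu_cont: "continuous_on {0..T} mu"
    and mu_pos: "\<forall>t\<in>{0..T}. mu t > 0"
    and zmu_sol: "solves_scaled_ivp h p z0 T mu zmu"
    and Phih_nz: "Phi_h Phi h p (zmu T) \<noteq> 0"
  shows
   "(\<forall>l1 l2.
       GG g T mu = C1 \<and> Phi (zmu T) = Philow \<and>
       (\<forall>t\<in>{0..T}. l1 * deriv g (mu t) + l2 * Phi_h Phi h p (zmu T) = 0) \<and>
       1 + l1 * g (mu T) + l2 * Phi_h Phi h p (zmu T) * mu T = 0
     \<longrightarrow>
       (let C2 = II T mu; l1r = l1; l2r = l2 * Phi_h Phi h p (zmu T) in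
          C2 > 0 \<and> Phi (zhat C2) = Philow \<and>
          GG g T mu = C1 \<and> II T mu = C2 \<and>
          (\<forall>t\<in>{0..T}. l1r * deriv g (mu t) + l2r = 0) \<and>
          1 + l1r * g (mu T) + l2r * mu T = 0))
    \<and>
    (\<forall>C2 l1r l2r.
       C2 > 0 \<and> Phi (zhat C2) = Philow \<and>
       GG g T mu = C1 \<and> II T mu = C2 \<and>
       (\<forall>t\<in>{0..T}. l1r * deriv g (mu t) + l2r = 0) \<and>
       1 + l1r * g (mu T) + l2r * mu T = 0
     \<longrightarrow>
       (let l1 = l1r; l2 = l2r / Phi_h Phi h p (zmu T) in
          GG g T mu = C1 \<and> Phi (zmu T) = Philow \<and>
          (\<forall>t\<in>{0..T}. l1 * deriv g (mu t) + l2 * Phi_h Phi h p (zmu T) = 0) \<and>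
          1 + l1 * g (mu T) + l2 * Phi_h Phi h p (zmu T) * mu T = 0))"
  proof -
  obtain D :: "real^'n \<Rightarrow> (real^'n) \<Rightarrow>\<^sub>L (real^'n)" where
    hD: "\<forall>x. ((\<lambda>y. h y p) has_derivative blinfun_apply (D x)) (at x)" and Dc: "continuous_on UNIV D"
    using h_C1 by blast
  have key: "zmu T = zhat (II T mu)"
    unfolding II_def by (rule key_reparam[OF hD Dc zhat_sol _ mu_cont zmu_sol]) (use T_pos in simp)
  have Ipos: "II T mu > 0"
  proof -
    obtain t0 where t0: "t0 \<in> {0..T}" and tmin: "\<forall>t\<in>{0..T}. mu t0 \<le> mu t"
      using continuous_attains_inf[OF compact_Icc _ mu_cont] T_pos by auto
    have "mu t0 > 0" using mu_pos t0 by auto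
    have "integral {0..T} (\<lambda>t. mu t0) \<le> integral {0..T} mu"
      by (rule integral_le) (use tmin mu_cont integrable_continuous_real in auto)
    moreover have "integral {0..T} (\<lambda>t. mu t0) = T * mu t0" using T_pos by simp
    moreover have "T * mu t0 > 0" using T_pos \<open>mu t0 > 0\<close> by simp
    ultimately show ?thesis unfolding II_def by linarith
  qed
  show ?thesis
    unfolding Let_def using key Ipos Phih_nz
    by (auto simp: algebra_simps)
qed

end
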